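(* Let $B_n$ be the number of bidirectional ballot sequences of length $n$. Then $B_n=\Omega(2^n/n)$.
   Context: A 0-1 sequence of length $n$ is a bidirectional ballot sequence if every nonempty prefix and every nonempty suffix of it contains strictly more 1's than 0's. *)

theory Defs
  imports Complex_Main "HOL-Library.Landau_Symbols"
begin

(* A 0-1 sequence is a list of booleans: True encodes 1, False encodes 0. *)
definition ones :: "bool list \<Rightarrow> nat" where
  "ones xs = length (filter (\<lambda>b. b) xs)"

definition zeros :: "bool list \<Rightarrow> nat" where
  "zeros xs = length (filter (\<lambda>b. \<not> b) xs)"

definition bidirectional_ballot :: "bool list \<Rightarrow> bool" where
  "bidirectional_ballot xs \<longleftrightarrow>
     (\<forall>k. 1 \<le> k \<and> k \<le> length xs \<longrightarrow>
        zeros (take k xs) < ones (take k xs) \<and> zeros (drop (length xs - k) xs) < ones (drop (length xs - k) xs))"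

definition B :: "nat \<Rightarrow> nat" where
  "B n = card {xs :: bool list. length xs = n \<and> bidirectional_ballot xs}"

end

theory Submission
  imports Defs
begin


fun ht :: "bool list \<Rightarrow> int" where
  "ht [] = 0" | "ht (b # xs) = (if b then 1 else -1) + ht xs"

lemma ht_append[simp]: "ht (xs @ ys) = ht xs + ht ys"
  by (induct xs) auto

lemma ht_rev[simp]: "ht (rev xs) = ht xs"
  by (induct xs) auto

lemma ht_map_Not[simp]: "ht (map Not xs) = - ht xs"
  by (induct xs) auto

lemma ones_zeros: "ones xs + zeros xs = length xs"
  unfolding ones_def zeros_def by (induct xs) auto

lemma ht_ones: "ht xs = 2 * int (ones xs) - int (length xs)"
  unfolding ones_def by (induct xs) auto

lemma ht_oz: "ht xs = int (ones xs) - int (zeros xs)"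
  using ht_ones[of xs] ones_zeros[of xs] by linarith

lemma ht_take_Suc:
  "j < length xs \<Longrightarrow> ht (take (Suc j) xs) = ht (take j xs) + (if xs ! j then 1 else -1)"
  by (simp add: take_Suc_conv_app_nth)

lemma ht_drop: "ht (drop m xs) = ht xs - ht (take m xs)"
  using ht_append[of "take m xs" "drop m xs"] by simp

lemma ivt_down:
  assumes "j \<le> length xs" "i \<le> j" "c \<le> ht (take i xs)" "ht (take j xs) \<le> c"
  shows "\<exists>k. i \<le> k \<and> k \<le> j \<and> ht (take k xs) = c"
  using assms
proof (induct j)
  case 0 then show ?case by auto
next
  case (Suc j)
  show ?case
  proof (cases "i = Suc j")
    case True then show ?thesis using Suc.prems by auto
  next
    case False
    then have ij: "i \<le> j" using Suc.prems by auto
    show ?thesis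
    proof (cases "ht (take j xs) \<le> c")
      case True
      from Suc.hyps[OF _ ij Suc.prems(3) True] Suc.prems(1) show ?thesis by force
    next
      case False
      have "ht (take (Suc j) xs) = ht (take j xs) + (if xs ! j then 1 else -1)"
        using Suc.prems(1) by (intro ht_take_Suc) auto
      then have "ht (take (Suc j) xs) = c" using False Suc.prems(4) by (auto split: if_splits)
      then show ?thesis using Suc.prems by auto
    qed
  qed
qed

lemma ivt_up:
  assumes "j \<le> length xs" "i \<le> j" "ht (take i xs) \<le> c" "c \<le> ht (take j xs)"
  shows "\<exists>k. i \<le> k \<and> k \<le> j \<and> ht (take k xs) = c"
proof -
  have "\<exists>k. i \<le> k \<and> k \<le> j \<and> ht (take k (map Not xs)) = - c"
    using assms by (intro ivt_down) (auto simp: take_map)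
  then show ?thesis by (auto simp: take_map)
qed

definition flip :: "nat \<Rightarrow> bool list \<Rightarrow> bool list" where
  "flip t xs = take t xs @ map Not (drop t xs)"

lemma length_flip[simp]: "length (flip t xs) = length xs"
  by (simp add: flip_def)

lemma flip_flip[simp]: "flip t (flip t xs) = xs"
  by (cases "t \<le> length xs") (auto simp: flip_def comp_def)

lemma ht_take_flip:
  assumes "t \<le> length xs"
  shows "ht (take i (flip t xs)) = (if i \<le> t then ht (take i xs) else 2 * ht (take t xs) - ht (take i xs))"
proof (cases "i \<le> t")
  case True then show ?thesis using assms by (simp add: flip_def)
next
  case False
  have "take i xs = take t xs @ take (i - t) (drop t xs)"
    using False by (metis le_add_diff_inverse nat_le_linear take_add)
  moreover have "take i (flip t xs) = take t xs @ map Not (take (i - t) (drop t xs))"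
    using False assms by (simp add: flip_def take_map)
  ultimately show ?thesis using False by simp
qed

lemma ht_flip: "t \<le> length xs \<Longrightarrow> ht (flip t xs) = 2 * ht (take t xs) - ht xs"
  using ht_take_flip[of t xs "length xs"] by (cases "length xs \<le> t") auto



lemma ones_append[simp]: "ones (xs @ ys) = ones xs + ones ys"
  by (simp add: ones_def)
lemma ones_Cons[simp]: "ones (b # xs) = (if b then 1 else 0) + ones xs"
  by (simp add: ones_def)
lemma ones_Nil[simp]: "ones [] = 0" by (simp add: ones_def)
lemma ones_le: "ones xs \<le> length xs" by (simp add: ones_def)

lemma card_W: "card {x. length x = L \<and> ones x = k} = L choose k"
proof (induct L arbitrary: k)
  case 0
  have "{x. length x = 0 \<and> ones x = k} = (if k = 0 then {[]} else {})" by auto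
  then show ?case by simp
next
  case (Suc L)
  show ?case
  proof (cases k)
    case 0
    have "{x. length x = Suc L \<and> ones x = k} = (#) False ` {x. length x = L \<and> ones x = 0}"
      using 0 by (auto simp: length_Suc_conv split: if_splits)
    then show ?thesis using Suc[of 0] 0 by (simp add: card_image)
  next
    case (Suc k')
    have "{x. length x = Suc L \<and> ones x = k} =
       ((#) True ` {x. length x = L \<and> ones x = k'}) \<union> ((#) False ` {x. length x = L \<and> ones x = k})"
      using Suc by (auto simp: length_Suc_conv split: if_splits)
    moreover have "finite {x. length x = L \<and> ones x = k'}" "finite {x. length x = L \<and> ones x = k}"
      using finite_lists_length_eq[of "UNIV::bool set" L] by (auto intro: rev_finite_subset)
    ultimately have "card {x. length x = Suc L \<and> ones x = k} =
        card ((#) True ` {x. length x = L \<and> ones x = k'}) + card ((#) False ` {x. length x = L \<and> ones x = k})"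
      by (simp only:) (rule card_Un_disjoint, auto)
    then have "card {x. length x = Suc L \<and> ones x = k} =
        card {x. length x = L \<and> ones x = k'} + card {x. length x = L \<and> ones x = k}"
      by (simp add: card_image)
    then show ?thesis using Suc.hyps[of k'] Suc.hyps[of k] \<open>k = Suc k'\<close> by simp
  qed
qed

definition hits :: "int \<Rightarrow> bool list \<Rightarrow> bool" where
  "hits c xs \<longleftrightarrow> (\<exists>i \<le> length xs. ht (take i xs) = c)"

definition fp :: "bool list \<Rightarrow> nat" where
  "fp xs = (LEAST i. i \<le> length xs \<and> ht (take i xs) = -1)"

definition R :: "bool list \<Rightarrow> bool list" where
  "R xs = flip (fp xs) xs"

lemma fp_props:
  assumes "hits (-1) xs"
  shows "fp xs \<le> length xs" "ht (take (fp xs) xs) = -1" "\<And>i. i < fp xs \<Longrightarrow> ht (take i xs) \<noteq> -1"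
proof -
  obtain i where "i \<le> length xs \<and> ht (take i xs) = -1" using assms hits_def by auto
  then have "fp xs \<le> length xs \<and> ht (take (fp xs) xs) = -1"
    unfolding fp_def by (rule LeastI)
  then show "fp xs \<le> length xs" "ht (take (fp xs) xs) = -1" by auto
  fix i assume "i < fp xs"
  then show "ht (take i xs) \<noteq> -1"
    using not_less_Least[of i "\<lambda>i. i \<le> length xs \<and> ht (take i xs) = -1"] \<open>fp xs \<le> length xs\<close>
    unfolding fp_def by auto
qed

lemma R_hits:
  assumes "hits (-1) xs"
  shows "hits (-1) (R xs)" "fp (R xs) = fp xs" "R (R xs) = xs" "ht (R xs) = -2 - ht xs"
    "length (R xs) = length xs"
proof -
  note fpx = fp_props[OF assms]
  have e: "ht (take (fp xs) (R xs)) = -1" using fpx unfolding R_def by (simp add: ht_take_flip)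
  then show h: "hits (-1) (R xs)" unfolding hits_def R_def using fpx by (auto intro!: exI[of _ "fp xs"])
  note fpr = fp_props[OF h]
  have "fp (R xs) \<le> fp xs" using fpr(3)[of "fp xs"] e by force
  moreover have "\<not> fp (R xs) < fp xs"
  proof
    assume a: "fp (R xs) < fp xs"
    then have "ht (take (fp (R xs)) (R xs)) = ht (take (fp (R xs)) xs)"
      using fpx unfolding R_def by (simp add: ht_take_flip)
    then show False using fpr(2) fpx(3)[OF a] by simp
  qed
  ultimately show "fp (R xs) = fp xs" by simp
  then show "R (R xs) = xs" by (simp add: R_def)
  show "ht (R xs) = -2 - ht xs" using fpx unfolding R_def by (simp add: ht_flip)
  show "length (R xs) = length xs" by (simp add: R_def)
qed

lemma neg_hits: "length xs = L \<Longrightarrow> ht xs < 0 \<Longrightarrow> hits (-1) xs"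
  using ivt_down[of L xs 0 "-1"] unfolding hits_def by force

lemma allTrue_ht: "ones xs = length xs \<Longrightarrow> 0 \<le> ht (take i xs)"
proof (induct xs arbitrary: i)
  case Nil then show ?case by simp
next
  case (Cons b xs)
  have "b" "ones xs = length xs" using Cons.prems ones_le[of xs] by (auto split: if_splits)
  then show ?case using Cons.hyps[of "i - 1"] by (cases i) auto
qed

lemma allTrue_nohit:
  assumes "ones xs = length xs"
  shows "\<not> hits (-1) xs"
  using allTrue_ht[OF assms] unfolding hits_def by (metis neg_0_le_iff_le not_one_le_zero)

lemma card_N:
  assumes "L \<le> 2 * k" "k \<le> L"
  shows "card {x. length x = L \<and> ones x = k \<and> \<not> hits (-1) x} + (L choose Suc k) = L choose k"
proof (cases "k = L")
  case True
  have "{x. length x = L \<and> ones x = k \<and> \<not> hits (-1) x} = {x. length x = L \<and> ones x = k}"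
    using True allTrue_nohit by auto
  then show ?thesis using card_W[of L k] True by simp
next
  case False
  let ?W = "{x. length x = L \<and> ones x = k}"
  let ?N = "{x. length x = L \<and> ones x = k \<and> \<not> hits (-1) x}"
  let ?H = "{x. length x = L \<and> ones x = k \<and> hits (-1) x}"
  let ?W' = "{x. length x = L \<and> ones x = L - 1 - k}"
  have fin: "finite ?W" using finite_lists_length_eq[of "UNIV::bool set" L] by (auto intro: rev_finite_subset)
  have "?W = ?N \<union> ?H" by auto
  then have c1: "card ?W = card ?N + card ?H"
    using fin by (simp only:) (rule card_Un_disjoint, auto intro: rev_finite_subset)
  have "bij_betw R ?H ?W'"
  proof (rule bij_betw_byWitness[where f' = R])
    show "\<forall>a\<in>?H. R (R a) = a" using R_hits by auto
    show "\<forall>a\<in>?W'. R (R a) = a"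
    proof
      fix a assume "a \<in> ?W'"
      then have "ht a < 0" using ht_ones[of a] False assms by auto
      then show "R (R a) = a" using R_hits neg_hits \<open>a \<in> ?W'\<close> by auto
    qed
    show "R ` ?H \<subseteq> ?W'"
    proof
      fix y assume "y \<in> R ` ?H"
      then obtain x where x: "x \<in> ?H" "y = R x" by auto
      then have "ht y = -2 - ht x" "length y = L" using R_hits by auto
      then show "y \<in> ?W'" using ht_ones[of x] ht_ones[of y] x by auto
    qed
    show "R ` ?W' \<subseteq> ?H"
    proof
      fix y assume "y \<in> R ` ?W'"
      then obtain x where x: "x \<in> ?W'" "y = R x" by auto
      then have "ht x < 0" using ht_ones[of x] False assms by auto
      then have hx: "hits (-1) x" using neg_hits x by auto
      then have "ht y = -2 - ht x" "length y = L" "hits (-1) y" using R_hits x by auto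
      then show "y \<in> ?H" using ht_ones[of x] ht_ones[of y] x False assms by auto
    qed
  qed
  then have "card ?H = card ?W'" by (rule bij_betw_same_card)
  also have "\<dots> = L choose (L - 1 - k)" by (rule card_W)
  also have "\<dots> = L choose Suc k" using False assms by (metis Suc_leI binomial_symmetric diff_diff_left le_neq_implies_less plus_1_eq_Suc)
  finally show ?thesis using c1 card_W[of L k] by simp
qed

lemma card_NN_ge:
  assumes "L \<le> 2 * a" "a \<le> L"
  shows "card {x. length x = L \<and> \<not> hits (-1) x \<and> a \<le> ones x} = L choose a"
  using assms
proof (induct "L - a" arbitrary: a)
  case 0
  then have "a = L" by simp
  have "{x. length x = L \<and> \<not> hits (-1) x \<and> a \<le> ones x} = {x. length x = L \<and> ones x = a \<and> \<not> hits (-1) x}"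
    using ones_le \<open>a = L\<close> by (auto intro: antisym)
  then show ?case using card_N[of L a] 0 \<open>a = L\<close> by (simp add: binomial_eq_0)
next
  case (Suc d)
  let ?S = "\<lambda>a. {x. length x = L \<and> \<not> hits (-1) x \<and> a \<le> ones x}"
  have fin: "finite (?S a)" using finite_lists_length_eq[of "UNIV::bool set" L] by (auto intro: rev_finite_subset)
  have "?S a = {x. length x = L \<and> ones x = a \<and> \<not> hits (-1) x} \<union> ?S (Suc a)" by auto
  then have "card (?S a) = card {x. length x = L \<and> ones x = a \<and> \<not> hits (-1) x} + card (?S (Suc a))"
    using fin by (simp only:) (rule card_Un_disjoint, auto intro: rev_finite_subset)
  moreover have "card (?S (Suc a)) = L choose Suc a" using Suc by auto
  ultimately show ?case using card_N[of L a] Suc by simp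
qed



lemma nohit_nonneg: "\<not> hits (-1) xs \<Longrightarrow> i \<le> length xs \<Longrightarrow> 0 \<le> ht (take i xs)"
  using ivt_down[of i xs 0 "-1"] unfolding hits_def by force

definition lvis :: "int \<Rightarrow> bool list \<Rightarrow> nat" where
  "lvis c xs = (GREATEST i. i \<le> length xs \<and> ht (take i xs) = c)"

lemma lvis_props:
  assumes "hits c xs"
  shows "lvis c xs \<le> length xs" "ht (take (lvis c xs) xs) = c"
    "\<And>i. lvis c xs < i \<Longrightarrow> i \<le> length xs \<Longrightarrow> ht (take i xs) \<noteq> c"
proof -
  obtain i where i: "i \<le> length xs \<and> ht (take i xs) = c" using assms hits_def by auto
  have "lvis c xs \<le> length xs \<and> ht (take (lvis c xs) xs) = c"
    unfolding lvis_def by (rule GreatestI_nat[of _ i "length xs"]) (use i in auto)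
  then show "lvis c xs \<le> length xs" "ht (take (lvis c xs) xs) = c" by auto
  fix j assume "lvis c xs < j" "j \<le> length xs"
  then show "ht (take j xs) \<noteq> c"
    using Greatest_le_nat[of "\<lambda>i. i \<le> length xs \<and> ht (take i xs) = c" j "length xs"]
    unfolding lvis_def by auto
qed

definition Phi :: "int \<Rightarrow> bool list \<Rightarrow> bool list" where
  "Phi d xs = flip (lvis (ht xs + d) xs) xs"

definition Psi :: "int \<Rightarrow> bool list \<Rightarrow> bool list" where
  "Psi d xs = flip (lvis (ht xs - d) xs) xs"

lemma Phi_props:
  assumes "0 < d" "\<not> hits (-1) x" "hits (ht x + d) x"
  shows "length (Phi d x) = length x" "\<not> hits (-1) (Phi d x)" "ht (Phi d x) = ht x + 2 * d"
    "Psi d (Phi d x) = x"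
proof -
  define c where "c = ht x + d"
  define t where "t = lvis c x"
  note lv = lvis_props[OF assms(3)[folded c_def], folded t_def]
  have below: "ht (take i x) < c" if ti: "t < i" and il: "i \<le> length x" for i
  proof (rule ccontr)
    assume "\<not> ht (take i x) < c"
    then obtain k where "i \<le> k" "k \<le> length x" "ht (take k x) = c"
      using ivt_down[of "length x" x i c] il c_def assms(1) by auto
    then show False using lv(3)[of k] ti by auto
  qed
  have Phi_eq: "Phi d x = flip t x" unfolding Phi_def t_def c_def by simp
  show "length (Phi d x) = length x" by (simp add: Phi_eq)
  have ht_take_Phi: "ht (take i (Phi d x)) = (if i \<le> t then ht (take i x) else 2 * c - ht (take i x))" for i
    using lv(1,2) by (simp add: Phi_eq ht_take_flip)
  have "0 \<le> ht x" using nohit_nonneg[OF assms(2), of "length x"] by simp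
  show "\<not> hits (-1) (Phi d x)"
  proof
    assume "hits (-1) (Phi d x)"
    then obtain i where i: "i \<le> length x" "ht (take i (Phi d x)) = -1"
      unfolding hits_def by (auto simp: Phi_eq)
    show False
    proof (cases "i \<le> t")
      case True then show False using i ht_take_Phi nohit_nonneg[OF assms(2) i(1)] by auto
    next
      case False then show False using i ht_take_Phi[of i] below[of i] \<open>0 \<le> ht x\<close> assms(1) c_def by auto
    qed
  qed
  show "ht (Phi d x) = ht x + 2 * d" using lv(1,2) by (simp add: Phi_eq ht_flip c_def)
  then have "ht (Phi d x) - d = c" by (simp add: c_def)
  moreover have "lvis c (Phi d x) = t"
    unfolding lvis_def
  proof (rule Greatest_equality)
    show "t \<le> length (Phi d x) \<and> ht (take t (Phi d x)) = c" using lv ht_take_Phi[of t] by (simp add: Phi_eq)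
    fix y assume "y \<le> length (Phi d x) \<and> ht (take y (Phi d x)) = c"
    then show "y \<le> t" using ht_take_Phi[of y] lv(3)[of y] by (auto simp: Phi_eq split: if_splits)
  qed
  ultimately show "Psi d (Phi d x) = x" unfolding Psi_def by (simp add: Phi_eq)
qed

lemma card_Bad:
  assumes "0 < d" "L = 2 * p" "p + nat d \<le> L"
  shows "card {x. length x = L \<and> \<not> hits (-1) x \<and> hits (ht x + d) x} \<le> L choose (p + nat d)"
proof -
  let ?Bad = "{x. length x = L \<and> \<not> hits (-1) x \<and> hits (ht x + d) x}"
  let ?T = "{x. length x = L \<and> \<not> hits (-1) x \<and> p + nat d \<le> ones x}"
  have inj: "inj_on (Phi d) ?Bad"
    by (rule inj_on_inverseI[where g = "Psi d"]) (use Phi_props[OF assms(1)] in auto)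
  have sub: "Phi d ` ?Bad \<subseteq> ?T"
  proof
    fix y assume "y \<in> Phi d ` ?Bad"
    then obtain x where x: "x \<in> ?Bad" "y = Phi d x" by auto
    note P = Phi_props[OF assms(1)] 
    have "0 \<le> ht x" using nohit_nonneg[of x "length x"] x by simp
    then have "ht y \<ge> 2 * d" using P x by auto
    then show "y \<in> ?T" using P x ht_ones[of y] assms by auto
  qed
  have fin: "finite ?T" using finite_lists_length_eq[of "UNIV::bool set" L] by (auto intro: rev_finite_subset)
  have "card ?Bad = card (Phi d ` ?Bad)" using inj by (simp add: card_image)
  also have "\<dots> \<le> card ?T" by (rule card_mono[OF fin sub])
  also have "\<dots> = L choose (p + nat d)" using assms by (intro card_NN_ge) auto
  finally show ?thesis .
qed



lemma bid_iff:
  "bidirectional_ballot xs \<longleftrightarrow>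
    (\<forall>k. 1 \<le> k \<and> k \<le> length xs \<longrightarrow> 0 < ht (take k xs) \<and> 0 < ht (drop (length xs - k) xs))"
  unfolding bidirectional_ballot_def ht_oz by auto

lemma bid_build:
  assumes h: "\<And>j. j \<le> length z \<Longrightarrow> 0 \<le> ht (take j z) \<and> ht (take j z) \<le> ht z"
  shows "bidirectional_ballot (True # z @ [True])"
proof -
  let ?w = "True # z @ [True]"
  have hz: "0 \<le> ht z" using h[of 0] by simp
  have tk: "ht (take (Suc m) ?w) = 1 + ht (take m z)" if "m \<le> length z" for m
    using that by simp
  have pre: "0 < ht (take k ?w) \<and> ht (take k ?w) < ht ?w" if k1: "1 \<le> k" and k2: "k < length ?w" for k
  proof -
    obtain m where m: "k = Suc m" using k1 by (cases k) auto
    then have "m \<le> length z" using k2 by simp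
    then show ?thesis using tk[of m] h[of m] m by simp
  qed
  show ?thesis unfolding bid_iff
  proof (intro allI impI conjI)
    fix k assume k: "1 \<le> k \<and> k \<le> length ?w"
    show "0 < ht (take k ?w)"
    proof (cases "k = length ?w")
      case True then show ?thesis using hz by simp
    next
      case False then show ?thesis using pre k by simp
    qed
    have d: "ht (drop (length ?w - k) ?w) = ht ?w - ht (take (length ?w - k) ?w)" by (rule ht_drop)
    show "0 < ht (drop (length ?w - k) ?w)"
    proof (cases "length ?w - k = 0")
      case True then show ?thesis using hz by simp
    next
      case False then show ?thesis using pre[of "length ?w - k"] k d by simp
    qed
  qed
qed

lemma bid_snoc:
  assumes "bidirectional_ballot xs"
  shows "bidirectional_ballot (xs @ [True])"
  unfolding bid_iff
proof (intro allI impI conjI)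
  fix k assume k: "1 \<le> k \<and> k \<le> length (xs @ [True])"
  note a = assms[unfolded bid_iff]
  have hx: "0 \<le> ht xs" using a[rule_format, of "length xs"] by (cases "length xs = 0") auto
  show "0 < ht (take k (xs @ [True]))"
  proof (cases "k \<le> length xs")
    case True then show ?thesis using a k by auto
  next
    case False then have "k = Suc (length xs)" using k by simp
    then show ?thesis using hx by simp
  qed
  have e: "drop (length (xs @ [True]) - k) (xs @ [True]) = drop (length xs - (k - 1)) xs @ [True]"
    using k by simp
  have "0 \<le> ht (drop (length xs - (k - 1)) xs)"
  proof (cases "k - 1 = 0")
    case True then show ?thesis by simp
  next
    case False
    have "Suc (length xs) - k = length xs - (k - 1)" using k by simp
    moreover have "1 \<le> k - 1 \<and> k - 1 \<le> length xs" using k False by auto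
    ultimately show ?thesis using a[rule_format, of "k - 1"] by (metis less_le)
  qed
  then show "0 < ht (drop (length (xs @ [True]) - k) (xs @ [True]))" using e by simp
qed

lemma finite_len: "finite {xs :: bool list. length xs = n \<and> P xs}"
  using finite_lists_length_eq[of "UNIV::bool set" n] by (auto intro: rev_finite_subset)

lemma B_mono_Suc: "B n \<le> B (Suc n)"
  unfolding B_def
proof -
  let ?S = "{xs :: bool list. length xs = n \<and> bidirectional_ballot xs}"
  let ?T = "{xs :: bool list. length xs = Suc n \<and> bidirectional_ballot xs}"
  have "inj_on (\<lambda>xs. xs @ [True]) ?S" by (auto intro: inj_onI)
  moreover have "(\<lambda>xs. xs @ [True]) ` ?S \<subseteq> ?T" using bid_snoc by auto
  ultimately show "card ?S \<le> card ?T" using card_inj_on_le finite_len by blast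
qed

lemma B_mono: "m \<le> n \<Longrightarrow> B m \<le> B n"
  by (induct n rule: dec_induct) (auto intro: order_trans B_mono_Suc)

definition G :: "nat \<Rightarrow> nat \<Rightarrow> bool list set" where
  "G p q = {x. length x = 2 * p \<and> \<not> hits (-1) x \<and> p + q \<le> ones x \<and> \<not> hits (ht x + 2 * int q + 1) x}"

lemma G_props:
  assumes "x \<in> G p q"
  shows "length x = 2 * p" "2 * int q \<le> ht x" "\<And>j. j \<le> length x \<Longrightarrow> 0 \<le> ht (take j x) \<and> ht (take j x) \<le> ht x + 2 * int q"
proof -
  show "length x = 2 * p" using assms G_def by auto
  then show "2 * int q \<le> ht x" using assms ht_ones[of x] G_def by auto
  fix j assume j: "j \<le> length x"
  have "0 \<le> ht (take j x)" using nohit_nonneg[of x j] assms j G_def by auto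
  moreover have "ht (take j x) \<le> ht x + 2 * int q"
  proof (rule ccontr)
    assume "\<not> ?thesis"
    then obtain k where "k \<le> length x" "ht (take k x) = ht x + 2 * int q + 1"
      using ivt_down[of "length x" x j "ht x + 2 * int q + 1"] j by auto
    then show False using assms G_def hits_def by auto
  qed
  ultimately show "0 \<le> ht (take j x) \<and> ht (take j x) \<le> ht x + 2 * int q" by simp
qed

lemma card_G_sq: "card (G p q) * card (G p q) \<le> B (4 * p + 2)"
proof -
  let ?pm = "\<lambda>(x, y). True # (x @ rev y) @ [True]"
  let ?T = "{xs :: bool list. length xs = 4 * p + 2 \<and> bidirectional_ballot xs}"
  have inj: "inj_on ?pm (G p q \<times> G p q)"
  proof (rule inj_onI)
    fix a b assume ab: "a \<in> G p q \<times> G p q" "b \<in> G p q \<times> G p q" and e0: "?pm a = ?pm b"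
    obtain x y where aa: "a = (x, y)" by (cases a)
    obtain x' y' where bb: "b = (x', y')" by (cases b)
    have a: "x \<in> G p q" "y \<in> G p q" "x' \<in> G p q" "y' \<in> G p q" using ab aa bb by auto
    have e: "True # (x @ rev y) @ [True] = True # (x' @ rev y') @ [True]" using e0 aa bb by simp
    have l: "length x = length x'" "length y = length y'" using a G_props(1) by metis+
    from e have "x @ rev y = x' @ rev y'" by simp
    then have "x = x' \<and> y = y'" using l by (simp add: append_eq_append_conv)
    then show "a = b" using aa bb by simp
  qed
  have sub: "?pm ` (G p q \<times> G p q) \<subseteq> ?T"
  proof (rule subsetI)
    fix w assume "w \<in> ?pm ` (G p q \<times> G p q)"
    then obtain x y where a: "x \<in> G p q" "y \<in> G p q" and wd: "w = True # (x @ rev y) @ [True]" by auto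
    note gx = G_props[OF a(1)] and gy = G_props[OF a(2)]
    let ?z = "x @ rev y"
    have "bidirectional_ballot (True # ?z @ [True])"
    proof (rule bid_build)
      fix j assume j: "j \<le> length ?z"
      show "0 \<le> ht (take j ?z) \<and> ht (take j ?z) \<le> ht ?z"
      proof (cases "j \<le> length x")
        case True then show ?thesis using gx(3)[of j] gy(2) by simp
      next
        case False
        define m where "m = length y - (j - length x)"
        have "take j ?z = x @ rev (drop m y)" using False unfolding m_def by (simp add: take_rev)
        then have "ht (take j ?z) = ht x + ht y - ht (take m y)" by (simp add: ht_drop)
        moreover have "m \<le> length y" unfolding m_def by simp
        ultimately show ?thesis using gy(3)[of m] gx(2) by simp
      qed
    qed
    moreover have "length (True # ?z @ [True]) = 4 * p + 2" using gx(1) gy(1) by simp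
    ultimately show "w \<in> ?T" using wd by simp
  qed
  have "card (G p q) * card (G p q) = card (G p q \<times> G p q)" by (simp add: card_cartesian_product)
  also have "\<dots> = card (?pm ` (G p q \<times> G p q))" using inj by (simp add: card_image)
  also have "\<dots> \<le> card ?T" using sub finite_len by (intro card_mono) auto
  finally show ?thesis unfolding B_def .
qed

lemma card_G_ge:
  assumes "p + 2 * q + 1 \<le> 2 * p"
  shows "((2 * p) choose (p + q)) \<le> card (G p q) + ((2 * p) choose (p + 2 * q + 1))"
proof -
  let ?L = "2 * p"
  let ?A = "{x. length x = ?L \<and> \<not> hits (-1) x \<and> p + q \<le> ones x}"
  let ?Bad = "{x. length x = ?L \<and> \<not> hits (-1) x \<and> hits (ht x + (2 * int q + 1)) x}"
  have g: "G p q = ?A - ?Bad" unfolding G_def by (auto simp: add.assoc)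
  have c1: "card ?A = ?L choose (p + q)" using assms by (intro card_NN_ge) auto
  have "card ?Bad \<le> ?L choose (p + nat (2 * int q + 1))"
    using assms by (intro card_Bad) auto
  moreover have "nat (2 * int q + 1) = 2 * q + 1" by simp
  ultimately have c2: "card ?Bad \<le> ?L choose (p + 2 * q + 1)" by (simp add: add.assoc)
  have c3: "card ?A - card ?Bad \<le> card (?A - ?Bad)"
    using finite_len by (intro diff_card_le_card_Diff) auto
  show ?thesis unfolding g using c1 c2 c3 by linarith
qed



lemma binom_step: "Suc k * (n choose Suc k) = (n - k) * (n choose k)"
  using binomial_absorption[of k n] binomial_absorb_comp[of n k] by simp

lemma cancel_aux:
  fixes A Bc C0 p :: nat
  assumes "(p+1) * A = (2*p+2) * Bc" "(p+1) * Bc = (2*p+1) * C0"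
  shows "(p+1) * A = 2 * (2*p+1) * C0"
proof -
  have "(2*p+2) * Bc = (p+1) * (2 * Bc)" by (simp add: algebra_simps)
  then have h: "(p+1) * A = (p+1) * (2 * Bc)" using assms(1) by simp
  have nz: "p + 1 \<noteq> 0" by simp
  have "A = 2 * Bc" by (rule iffD1[OF mult_left_cancel[OF nz] h])
  then have "(p+1) * A = 2 * ((p+1) * Bc)" by simp
  then show ?thesis using assms(2) by simp
qed

lemma central_step: "Suc p * (Suc (Suc (2 * p)) choose Suc p) = 2 * (2 * p + 1) * ((2 * p) choose p)"
proof -
  have a: "Suc p * (Suc (Suc (2*p)) choose Suc p) = Suc (Suc (2*p)) * (Suc (2*p) choose p)"
    by (rule Suc_times_binomial)
  have b: "Suc (2*p) choose p = Suc (2*p) choose Suc p"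
    using binomial_symmetric[of p "Suc (2*p)"] by simp
  have c: "Suc p * (Suc (2*p) choose Suc p) = Suc (2*p) * ((2*p) choose p)"
    by (rule Suc_times_binomial)
  show ?thesis
    using cancel_aux[of p "Suc (Suc (2*p)) choose Suc p" "Suc (2*p) choose p" "(2*p) choose p"] a b c
    by (simp only: Suc_eq_plus1 add.assoc one_add_one)
qed

lemma central_lower: "p \<ge> 1 \<Longrightarrow> 16 ^ p \<le> 4 * real p * (real ((2 * p) choose p))^2"
proof (induct p rule: dec_induct)
  case base then show ?case by simp
next
  case (step p)
  define c where "c = real ((2 * p) choose p)"
  define X where "X = real (Suc (Suc (2 * p)) choose Suc p)"
  have "real (Suc p * (Suc (Suc (2 * p)) choose Suc p)) = real (2 * (2 * p + 1) * ((2 * p) choose p))"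
    using central_step[of p] by (simp only:)
  then have e: "(real p + 1) * X = 2 * (2 * real p + 1) * c"
    unfolding c_def X_def by (simp only: of_nat_mult of_nat_Suc of_nat_add of_nat_numeral of_nat_1 add.commute)
  have e2: "(real p + 1)^2 * X^2 = 4 * (2 * real p + 1)^2 * c^2"
  proof -
    have "(real p + 1)^2 * X^2 = ((real p + 1) * X)^2" by (simp add: power_mult_distrib)
    also have "\<dots> = (2 * (2 * real p + 1) * c)^2" using e by simp
    also have "\<dots> = 4 * (2 * real p + 1)^2 * c^2" by (simp only: power_mult_distrib) simp
    finally show ?thesis .
  qed
  have ih: "16 ^ p \<le> 4 * real p * c^2" using step.hyps unfolding c_def by simp
  have k: "4 * real p * (real p + 1) \<le> (2 * real p + 1)^2" by (simp add: power2_eq_square algebra_simps)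
  have "16 ^ Suc p * (real p + 1) = 16 * (real p + 1) * 16 ^ p" by simp
  also have "\<dots> \<le> 16 * (real p + 1) * (4 * real p * c^2)" using ih by (intro mult_left_mono) auto
  also have "\<dots> = 16 * c^2 * (4 * real p * (real p + 1))" by (simp add: algebra_simps)
  also have "\<dots> \<le> 16 * c^2 * (2 * real p + 1)^2" using k by (intro mult_left_mono) auto
  also have "\<dots> = 4 * (4 * (2 * real p + 1)^2 * c^2)" by simp
  also have "\<dots> = 4 * ((real p + 1)^2 * X^2)" by (simp only: e2)
  also have "\<dots> = (4 * (real p + 1) * X^2) * (real p + 1)" by (simp add: power2_eq_square algebra_simps)
  finally have "16 ^ Suc p * (real p + 1) \<le> (4 * (real p + 1) * X^2) * (real p + 1)" .
  then have "16 ^ Suc p \<le> 4 * (real p + 1) * X^2"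
    by (rule mult_right_le_imp_le) simp
  moreover have "2 * Suc p = Suc (Suc (2 * p))" by simp
  ultimately show ?case unfolding X_def by (simp only: of_nat_Suc add.commute)
qed


lemma ratio_lower:
  assumes "p \<ge> 1" "t \<le> p"
  shows "real ((2*p) choose (p + t)) \<ge> real ((2*p) choose p) * (1 - real t ^ 2 / real p)"
  using assms(2)
proof (induct t)
  case 0 then show ?case by simp
next
  case (Suc t)
  define C where "C = real ((2*p) choose p)"
  define a where "a = real ((2*p) choose (p + t))"
  have st: "real (Suc (p+t)) * real ((2*p) choose Suc (p+t)) = real (2*p - (p+t)) * a"
    using binom_step[of "p+t" "2*p"] unfolding a_def by (metis of_nat_mult)
  have pt: "real (2*p - (p+t)) = real p - real t" using Suc.prems by (simp add: of_nat_diff)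
  have e: "real ((2*p) choose (p + Suc t)) = a * (real p - real t) / (real p + real t + 1)"
    using st unfolding pt by (simp add: field_simps)
  have amax: "a \<le> C" unfolding a_def C_def using binomial_maximum'[of p "p+t"] by simp
  have ih: "a \<ge> C * (1 - real t ^ 2 / real p)" using Suc unfolding a_def C_def by simp
  have e2: "a * (real p - real t) / (real p + real t + 1) = a - a * (2 * t + 1) / (real p + real t + 1)"
    by (simp add: field_simps)
  have Y: "a * (2 * t + 1) / (real p + real t + 1) \<le> C * (2 * t + 1) / p"
  proof -
    have "a * (2 * t + 1) \<le> C * (2 * t + 1)" using amax by (intro mult_right_mono) auto
    moreover have "C * (2 * t + 1) / (real p + real t + 1) \<le> C * (2 * t + 1) / p"
      using assms(1) by (intro divide_left_mono) (auto simp: C_def)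
    ultimately show ?thesis by (smt (verit) divide_right_mono of_nat_0_le_iff)
  qed
  have "real ((2*p) choose (p + Suc t)) \<ge> a - C * (2 * t + 1) / p" using e e2 Y by linarith
  moreover have "a - C * (2 * t + 1) / p \<ge> C * (1 - real (Suc t) ^ 2 / real p)"
  proof -
    have "C * (1 - real (Suc t) ^ 2 / real p) = C * (1 - real t ^ 2 / real p) - C * (2 * t + 1) / p"
      using assms(1) by (simp add: field_simps power2_eq_square)
    then show ?thesis using ih by linarith
  qed
  ultimately show ?case unfolding C_def by simp
qed


lemma diff_lower:
  assumes "p + j + 1 \<le> 2 * p" "p \<ge> 1"
  shows "real ((2*p) choose (p + j)) - real ((2*p) choose (p + j + 1)) \<ge>
         real ((2*p) choose (p + j + 1)) * (2 * j + 1) / p"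
proof -
  define a where "a = real ((2*p) choose (p + j))"
  define b where "b = real ((2*p) choose (p + j + 1))"
  have st: "real (Suc (p+j)) * b = real (2*p - (p+j)) * a"
    using binom_step[of "p+j" "2*p"] unfolding a_def b_def by (metis Suc_eq_plus1 of_nat_mult)
  have pj: "real (2*p - (p+j)) = real p - j" using assms by (simp add: of_nat_diff)
  have pos: "real p - j > 0" using assms by simp
  have "a = b * (p + j + 1) / (p - j)" using st pj pos by (simp add: field_simps)
  then have "a - b = b * (2 * j + 1) / (p - j)" using pos by (simp add: field_simps)
  moreover have "b * (2 * j + 1) / (p - j) \<ge> b * (2 * j + 1) / p"
    using pos unfolding b_def by (intro divide_left_mono) auto
  ultimately show ?thesis unfolding a_def b_def by simp
qed

lemma tele_lower:
  assumes "p + q + m \<le> 2 * p" "p \<ge> 1"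
  shows "real ((2*p) choose (p + q)) - real ((2*p) choose (p + q + m)) \<ge>
         real m * (2 * q + 1) / p * real ((2*p) choose (p + q + m))"
  using assms(1)
proof (induct m)
  case 0 then show ?case by simp
next
  case (Suc m)
  define c where "c = (\<lambda>k. real ((2*p) choose k))"
  have d: "c (p + q + m) - c (p + q + m + 1) \<ge> c (p + q + m + 1) * (2 * (q + m) + 1) / p"
    using diff_lower[of p "q + m"] Suc.prems assms(2) unfolding c_def by (simp add: add.assoc)
  have ih: "c (p + q) - c (p + q + m) \<ge> real m * (2 * q + 1) / p * c (p + q + m)"
    using Suc unfolding c_def by simp
  define K where "K = (2 * real q + 1) / p"
  have "real m * K * c (p + q + m) = real m * (2 * q + 1) / p * c (p + q + m)"
    unfolding K_def by (simp add: field_simps)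
  then have ih': "c (p + q) - c (p + q + m) \<ge> real m * K * c (p + q + m)" using ih by linarith
  have "c (p + q + m + 1) * (2 * (q + m) + 1) / p \<ge> c (p + q + m + 1) * K"
    unfolding K_def using assms(2) by (simp add: field_simps c_def divide_right_mono)
  then have d': "c (p + q + m) - c (p + q + m + 1) \<ge> K * c (p + q + m + 1)" using d by (simp add: mult.commute)
  have K0: "K \<ge> 0" unfolding K_def by simp
  have c1: "0 \<le> c (p + q + m + 1)" unfolding c_def by simp
  then have mono: "c (p + q + m + 1) \<le> c (p + q + m)" using d' K0 by (smt (verit) mult_nonneg_nonneg)
  have "real m * K * c (p + q + m + 1) \<le> real m * K * c (p + q + m)"
    using mono K0 by (intro mult_left_mono) auto
  moreover have "(real m + 1) * K * c (p + q + m + 1) = real m * K * c (p + q + m + 1) + K * c (p + q + m + 1)"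
    by (simp add: algebra_simps)
  ultimately have "c (p + q) - c (p + q + m + 1) \<ge> (real m + 1) * K * c (p + q + m + 1)"
    using ih' d' by linarith
  moreover have "(real m + 1) * K * c (p + q + m + 1) = real (Suc m) * (2 * q + 1) / p * c (p + q + m + 1)"
    unfolding K_def by (simp add: field_simps)
  ultimately have "c (p + q) - c (p + q + m + 1) \<ge> real (Suc m) * (2 * q + 1) / p * c (p + q + m + 1)"
    by linarith
  then show ?case unfolding c_def by (simp add: add.assoc)
qed



lemma main_p:
  assumes p: "p \<ge> 64"
  shows "16 ^ p / (4096 * real p) \<le> real (B (4 * p + 2))"
proof -
  define s where "s = sqrt (real p)"
  define q where "q = nat \<lfloor>s / 4\<rfloor>"
  have s8: "s \<ge> 8" unfolding s_def using p by (simp add: real_le_rsqrt)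
  have ss: "s * s = real p" unfolding s_def by simp
  have q1: "real q \<le> s / 4" unfolding q_def using s8 by linarith
  have q2: "s / 4 \<le> real q + 1" unfolding q_def using s8 by linarith
  have t1: "2 * real q + 1 \<le> s / 2 + 1" using q1 by simp
  have s8s: "8 * s \<le> s * s" using s8 by (intro mult_right_mono) auto
  have "(2 * real q + 1)^2 \<le> (s / 2 + 1)^2" using t1 by (intro power_mono) auto
  also have "(s / 2 + 1)^2 = s * s / 4 + s + 1" by (simp add: power2_eq_square field_simps)
  also have "\<dots> \<le> real p / 2" using s8s ss s8 by linarith
  finally have tt: "(2 * real q + 1)^2 \<le> real p / 2" .
  have "(s / 4)^2 \<le> (real q + 1)^2" using q2 s8 by (intro power_mono) auto
  then have qq: "real p / 16 \<le> (real q + 1)^2" using ss by (simp add: power2_eq_square)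
  have "real (p + 2 * q + 1) \<le> real (2 * p)" using t1 s8s ss s8 by simp
  then have pq: "p + 2 * q + 1 \<le> 2 * p" by (simp only: of_nat_le_iff)
  have p1: "p \<ge> 1" using p by simp
  define C where "C = (\<lambda>k. real ((2 * p) choose k))"
  have g: "C (p + q) \<le> real (card (G p q)) + C (p + 2 * q + 1)"
    using card_G_ge[OF pq] unfolding C_def by (metis of_nat_add of_nat_le_iff)
  have tl: "C (p + q) - C (p + q + (q + 1)) \<ge> real (q + 1) * (2 * q + 1) / p * C (p + q + (q + 1))"
    using tele_lower[of p q "q + 1"] pq p1 unfolding C_def by simp
  have e1: "p + q + (q + 1) = p + 2 * q + 1" by simp
  have rl: "C (p + (2 * q + 1)) \<ge> C p * (1 - real (2 * q + 1) ^ 2 / real p)"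
    using ratio_lower[of p "2 * q + 1"] pq p1 unfolding C_def by simp
  have "real (2 * q + 1) ^ 2 / real p \<le> 1 / 2" using tt p1 by (simp add: field_simps)
  then have "C p * (1 - real (2 * q + 1) ^ 2 / real p) \<ge> C p * (1/2)"
    unfolding C_def by (intro mult_left_mono) auto
  moreover have "C (p + (2 * q + 1)) = C (p + 2 * q + 1)" by (simp only: add.assoc)
  ultimately have rl2: "C (p + 2 * q + 1) \<ge> C p / 2" using rl by linarith
  have f1: "real (q + 1) * (2 * q + 1) / p \<ge> 1 / 16"
  proof -
    have "(real q + 1)^2 \<le> (real q + 1) * (2 * real q + 1)" by (simp add: power2_eq_square algebra_simps)
    then have "real p / 16 \<le> (real q + 1) * (2 * real q + 1)" using qq by linarith
    then show ?thesis using p1 by (simp add: field_simps)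
  qed
  have Cnn: "0 \<le> C (p + 2 * q + 1)" unfolding C_def by simp
  have "real (card (G p q)) \<ge> real (q + 1) * (2 * q + 1) / p * C (p + 2 * q + 1)"
  proof -
    have tl': "C (p + q) - C (p + 2 * q + 1) \<ge> real (q + 1) * (2 * q + 1) / p * C (p + 2 * q + 1)"
      using tl unfolding e1 .
    show ?thesis using g tl' by linarith
  qed
  moreover have "real (q + 1) * (2 * q + 1) / p * C (p + 2 * q + 1) \<ge> 1 / 16 * C (p + 2 * q + 1)"
    using f1 Cnn by (intro mult_right_mono) auto
  moreover have "1 / 16 * C (p + 2 * q + 1) \<ge> 1 / 16 * (C p / 2)" using rl2 by simp
  ultimately have gc: "real (card (G p q)) \<ge> C p / 32" by simp
  have Cp: "0 \<le> C p / 32" unfolding C_def by simp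
  have "(C p / 32) * (C p / 32) \<le> real (card (G p q)) * real (card (G p q))"
    using gc Cp by (intro mult_mono) auto
  also have "\<dots> \<le> real (B (4 * p + 2))" using card_G_sq[of p q] by (metis of_nat_le_iff of_nat_mult)
  finally have b1: "C p ^ 2 / 1024 \<le> real (B (4 * p + 2))" by (simp add: power2_eq_square)
  have "16 ^ p \<le> 4 * real p * C p ^ 2" using central_lower[OF p1] unfolding C_def by simp
  then have "16 ^ p / (4096 * real p) \<le> C p ^ 2 / 1024" using p1 by (simp add: field_simps)
  then show ?thesis using b1 by linarith
qed

theorem proposition13:
  shows "(\<lambda>n. real (B n)) \<in> \<Omega>(\<lambda>n. 2 ^ n / real n)"
proof (rule landau_omega.bigI[of "1 / 32768"])
  show "(0::real) < 1 / 32768" by simp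
  show "\<forall>\<^sub>F n in at_top. norm (real (B n)) \<ge> 1 / 32768 * norm (2 ^ n / real n :: real)"
    unfolding eventually_at_top_linorder
  proof (intro exI allI impI)
    fix n :: nat assume n: "n \<ge> 258"
    define p where "p = (n - 2) div 4"
    have p64: "p \<ge> 64" unfolding p_def using n by simp
    have le: "4 * p + 2 \<le> n" "n \<le> 4 * p + 5" unfolding p_def using n by auto
    have "real (B (4 * p + 2)) \<le> real (B n)" using B_mono[OF le(1)] by simp
    moreover have "16 ^ p / (4096 * real p) \<le> real (B (4 * p + 2))" by (rule main_p[OF p64])
    moreover have "1 / 32768 * (2 ^ n / real n) \<le> 16 ^ p / (4096 * real p)"
    proof -
      have "(2::real) ^ n \<le> 2 ^ (4 * p + 5)" using le by (intro power_increasing) auto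
      also have "\<dots> = 32 * 16 ^ p" by (simp add: power_add power_mult)
      finally have a: "(2::real) ^ n \<le> 32 * 16 ^ p" .
      have b: "4 * real p \<le> real n" using le by linarith
      have pp: "real p > 0" using p64 by simp
      have "2 ^ n / real n \<le> 32 * 16 ^ p / (4 * real p)"
        using a b pp by (intro frac_le) auto
      then have "1 / 32768 * (2 ^ n / real n) \<le> 1 / 32768 * (32 * 16 ^ p / (4 * real p))"
        by (intro mult_left_mono) auto
      also have "1 / 32768 * (32 * 16 ^ p / (4 * real p)) = 16 ^ p / (4096 * real p)"
        by (simp add: field_simps)
      finally show ?thesis .
    qed
    ultimately show "norm (real (B n)) \<ge> 1 / 32768 * norm (2 ^ n / real n :: real)" by simp
  qed
qed

end
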